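(* For each $\eta\in(0,\eta_4)$ and each integer $j\ge1$, we have $\{z_k:k\ge j\}\subset D(0,|z_j|)$ and the broken segment $z_0z_1\cdots z_{j-1}$ is contained in $\mathbb{C}\setminus D(0,|z_j|)$.
   Context: For $\eta\in(0,\pi/3)$ let $a=\frac{e^{-i\eta}}{2\cos\eta}$, $c=\frac{1}{1-|a|^4}$, $z_k=ca^{k+1}$ for $k\ge0$. Let $\Phi_4(\eta)=(1-|a|^4)\sin3\eta-|a|^3\sin2\eta+|a|^4\sin\eta$; it has a unique zero in $(\pi/4,\pi/3)$, denoted $\eta_4$. $D(0,r)$ is the closed disk of radius $r$ centered at $0$; $v_0v_1\cdots v_n$ denotes the union of the segments $v_{i-1}v_i$, $i=1,\dots,n$ (for $j=1$ it is the single point $z_0$). *)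

theory Defs
  imports "HOL-Analysis.Analysis"
begin

definition a_par :: "real \<Rightarrow> complex" where
  "a_par \<eta> = cis (- \<eta>) / complex_of_real (2 * cos \<eta>)"

definition c_par :: "real \<Rightarrow> real" where
  "c_par \<eta> = 1 / (1 - cmod (a_par \<eta>) ^ 4)"

definition zk :: "real \<Rightarrow> nat \<Rightarrow> complex" where
  "zk \<eta> k = complex_of_real (c_par \<eta>) * a_par \<eta> ^ (k + 1)"

definition Phi4 :: "real \<Rightarrow> real" where
  "Phi4 \<eta> = (1 - cmod (a_par \<eta>) ^ 4) * sin (3 * \<eta>)
              - cmod (a_par \<eta>) ^ 3 * sin (2 * \<eta>) + cmod (a_par \<eta>) ^ 4 * sin \<eta>"

definition eta4 :: real where
  "eta4 = (THE \<eta>. pi / 4 < \<eta> \<and> \<eta> < pi / 3 \<and> Phi4 \<eta> = 0)"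

definition broken_seg :: "real \<Rightarrow> nat \<Rightarrow> complex set" where
  "broken_seg \<eta> j = {zk \<eta> 0} \<union> (\<Union>i\<in>{1..<j}. closed_segment (zk \<eta> (i - 1)) (zk \<eta> i))"

end

theory Submission
  imports Defs
begin

lemma sin3: "sin (3 * (x::real)) = sin x * (4 * (cos x)^2 - 1)"
proof -
  have "sin (3*x) = sin (2*x + x)" by simp
  also have "... = sin (2*x) * cos x + cos (2*x) * sin x" by (rule sin_add)
  also have "... = sin x * (4 * (cos x)^2 - 1)"
    unfolding sin_double cos_double sin_squared_eq by (simp add: power2_eq_square algebra_simps)
  finally show ?thesis .
qed

lemma cmod_a: assumes "cos e > 0" shows "cmod (a_par e) = 1 / (2 * cos e)"
  using assms by (simp add: a_par_def norm_divide)

lemma Re_a: assumes "cos e > 0" shows "Re (a_par e) = 1/2"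
  using assms by (simp add: a_par_def Re_divide_of_real)
lemma Im_a: assumes "cos e > 0" shows "Im (a_par e) = - sin e / (2 * cos e)"
  using assms by (simp add: a_par_def Im_divide_of_real)

lemma Phi4_eq: assumes "cos e > 0"
  shows "Phi4 e = sin e * (4*(cos e)^2 - 1) * ((4*(cos e)^2)^2 - 2) / (4*(cos e)^2)^2"
proof -
  have "Phi4 e = (1 - (1 / (2 * cos e))^4) * (sin e * (4 * (cos e)^2 - 1))
     - (1 / (2 * cos e))^3 * (2 * sin e * cos e) + (1 / (2 * cos e))^4 * sin e"
    unfolding Phi4_def cmod_a[OF assms] sin3 sin_double by simp
  also have "... = sin e * (4*(cos e)^2 - 1) * ((4*(cos e)^2)^2 - 2) / (4*(cos e)^2)^2"
    using assms by (simp add: field_simps power2_eq_square power4_eq_xxxx power3_eq_cube)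
  finally show ?thesis .
qed
    

lemma sqrt2_bounds: "1 < sqrt (2::real)" "sqrt (2::real) < 2"
proof -
  have "sqrt 1 < sqrt (2::real)" by (rule real_sqrt_less_mono) simp
  then show "1 < sqrt (2::real)" by simp
  have "sqrt (2::real) < sqrt 4" by (rule real_sqrt_less_mono) simp
  also have "sqrt (4::real) = 2" by (rule real_sqrt_unique) auto
  finally show "sqrt (2::real) < 2" .
qed

lemma v_bounds: "1/2 < sqrt (sqrt 2 / 4)" "sqrt (sqrt 2 / 4) < sqrt 2 / 2"
proof -
  have s2: "sqrt 2 > 1" "sqrt 2 < 2" using sqrt2_bounds by auto
  have "sqrt (1/4) < sqrt (sqrt 2 / 4)" using s2 by (intro real_sqrt_less_mono) simp
  moreover have "sqrt (1/4) = (1/2::real)" by (rule real_sqrt_unique) (auto simp: power_divide)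
  ultimately show "1/2 < sqrt (sqrt 2 / 4)" by simp
  have "sqrt (sqrt 2 / 4) < sqrt (1/2)" using s2 by simp
  also have "sqrt (1/2) = sqrt 2 / 2" by (rule real_sqrt_unique) (auto simp: power_divide)
  finally show "sqrt (sqrt 2 / 4) < sqrt 2 / 2" .
qed

lemma eta4_eq: "eta4 = arccos (sqrt (sqrt 2 / 4))"
proof -
  define v where "v = sqrt (sqrt 2 / 4)"
  have v1: "1/2 < v" "v < sqrt 2 / 2" using v_bounds by (simp_all add: v_def)
  have s2: "sqrt 2 < 2" using sqrt2_bounds by auto
  have vsq: "v^2 = sqrt 2 / 4" by (simp add: v_def)
  define e0 where "e0 = arccos v"
  have ce0: "cos e0 = v" using v1 s2 by (simp add: e0_def)
  have e0r: "0 \<le> e0" "e0 \<le> pi" unfolding e0_def using v1 s2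
    by (intro arccos_lbound arccos_ubound; simp)+
  have "pi/4 < e0" using cos_mono_less_eq[of e0 "pi/4"] e0r ce0 v1 by (simp add: cos_45)
  moreover have "e0 < pi/3" using cos_mono_less_eq[of "pi/3" e0] e0r ce0 v1 by (simp add: cos_60)
  moreover have "Phi4 e0 = 0"
    using v1 by (simp add: Phi4_eq ce0 vsq)
  moreover have uq: "e = e0" if "pi/4 < e" "e < pi/3" "Phi4 e = 0" for e
  proof -
    have er: "0 \<le> e" "e \<le> pi" using that pi_gt_zero by linarith+
    have "cos e < cos (pi/4)" using cos_mono_less_eq[of e "pi/4"] er that by simp
    have c2: "cos e > 1/2" using cos_mono_less_eq[of "pi/3" e] er that by (simp add: cos_60)
    have "sin e > 0" using er that by (intro sin_gt_zero) auto
    moreover have "4*(cos e)^2 - 1 > 0"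
    proof -
      have "(cos e)^2 > (1/2)^2" using c2 by (intro power_strict_mono) auto
      then show ?thesis by (simp add: power_divide)
    qed
    ultimately have "(4*(cos e)^2)^2 - 2 = 0" using that(3) c2 by (simp add: Phi4_eq)
    then have "(4*(cos e)^2)^2 = 2" by simp
    then have "4*(cos e)^2 = sqrt 2" by (intro real_sqrt_unique[symmetric]) auto
    then have "(cos e)^2 = sqrt 2 / 4" by simp
    then have "cos e = v" unfolding v_def using c2 by (intro real_sqrt_unique[symmetric]) auto
    then show ?thesis unfolding e0_def using arccos_cos er by metis
  qed
  ultimately have P: "pi / 4 < e0 \<and> e0 < pi / 3 \<and> Phi4 e0 = 0" by blast
  have "eta4 = e0" unfolding eta4_def
  proof (rule the_equality)
    show "pi / 4 < e0 \<and> e0 < pi / 3 \<and> Phi4 e0 = 0" by (rule P)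
    fix e assume "pi / 4 < e \<and> e < pi / 3 \<and> Phi4 e = 0"
    then show "e = e0" using uq by blast
  qed
  then show ?thesis by (simp add: e0_def v_def)
qed


lemma seg_key:
  fixes u t :: real
  assumes "u^2 > 2" "u > 0" "0 \<le> t" "t \<le> 1"
  shows "u^2 * (1 - t) + u * t^2 - 1 > 0"
proof -
  have u1: "u > 1"
  proof (rule ccontr)
    assume "\<not> u > 1"
    then have "u^2 \<le> 1^2" using assms(2) by (intro power_mono) auto
    then show False using assms(1) by simp
  qed
  have "u^2 * (1 - t) \<ge> 2 * (1 - t)" using assms by (intro mult_right_mono) auto
  moreover have "2 * (1 - t) + u * t^2 - 1 > 0"
  proof (cases "t = 0")
    case True then show ?thesis by simp
  next
    case False
    then have "(u - 1) * t^2 > 0" using u1 by simp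
    moreover have "2 * (1 - t) + u * t^2 - 1 = (1 - t)^2 + (u - 1) * t^2"
      by (simp add: power2_eq_square algebra_simps)
    ultimately show ?thesis by (smt (verit) zero_le_power2)
  qed
  ultimately show ?thesis by linarith
qed

lemma seg_bound:
  assumes c0: "cos e > 0" and u2: "(4 * (cos e)^2)^2 > 2"
    and w: "w \<in> closed_segment 1 (a_par e)"
  shows "cmod w > cmod (a_par e) ^ 2"
proof -
  obtain t where t: "0 \<le> t" "t \<le> 1" and wt: "w = (1 - t) *\<^sub>R 1 + t *\<^sub>R a_par e"
    using w unfolding closed_segment_def by blast
  define c where "c = cos e"
  define s where "s = sin e"
  have cpos: "c > 0" using c0 c_def by simp
  have sc: "s^2 = 1 - c^2" unfolding s_def c_def by (simp add: sin_squared_eq)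
  have Rew: "Re w = 1 - t/2" unfolding wt by (simp add: scaleR_conv_of_real Re_a[OF c0])
  have Imw: "Im w = - t * s / (2 * c)" unfolding wt by (simp add: s_def c_def scaleR_conv_of_real Im_a[OF c0])
  have ca: "cmod (a_par e) ^ 2 = 1 / (4 * c^2)" using cmod_a[OF c0] by (simp add: c_def power_divide)
  define u where "u = 4 * c^2"
  have upos: "u > 0" using cpos by (simp add: u_def)
  have key: "u^2 * (1 - t) + u * t^2 - 1 > 0"
    using seg_key[of u t] u2 upos t by (simp add: u_def c_def)
  have eq: "(cmod w)^2 = (Re w)^2 + (Im w)^2" by (simp add: cmod_power2)
  have eq2: "((Re w)^2 + (Im w)^2) * u^2 = u^2 * (1 - t) + u * t^2"
  proof -
    have ImI: "(Im w)^2 = t^2 * (1 - c^2) / (4 * c^2)" unfolding Imw sc[symmetric]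
      by (simp add: power_divide power_mult_distrib)
    show ?thesis unfolding ImI Rew u_def using cpos
      by (simp add: field_simps power2_eq_square)
  qed
  have "((Re w)^2 + (Im w)^2) * u^2 > 1" using eq2 key by simp
  then have "(cmod w)^2 > 1 / u^2" using upos eq by (simp add: field_simps)
  also have "1 / u^2 = (cmod (a_par e) ^ 2)^2" using ca by (simp add: u_def power_divide)
  finally have "(cmod (a_par e) ^ 2)^2 < (cmod w)^2" .
  then show ?thesis by (rule power_less_imp_less_base) simp
qed


theorem lemma5p4:
  fixes \<eta> :: real and j :: nat
  assumes "0 < \<eta>" and "\<eta> < eta4" and "1 \<le> j"
  shows "{zk \<eta> k | k. k \<ge> j} \<subseteq> cball 0 (cmod (zk \<eta> j))
         \<and> broken_seg \<eta> j \<subseteq> - cball 0 (cmod (zk \<eta> j))"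
proof -
  define v where "v = sqrt (sqrt 2 / 4)"
  have v1: "1/2 < v" "v < sqrt 2 / 2" using v_bounds by (simp_all add: v_def)
  have s2: "sqrt 2 < 2" using sqrt2_bounds by auto
  have vsq: "v^2 = sqrt 2 / 4" by (simp add: v_def)
  have e4: "eta4 = arccos v" by (simp add: eta4_eq v_def)
  have e4r: "0 \<le> eta4" "eta4 \<le> pi" unfolding e4 using v1 s2
    by (intro arccos_lbound arccos_ubound; simp)+
  have ce4: "cos eta4 = v" unfolding e4 using v1 s2 by simp
  have cv: "cos \<eta> > v" using cos_mono_less_eq[of eta4 \<eta>] assms e4r ce4 by simp
  have c0: "cos \<eta> > 0" using cv v1 by simp
  have "(cos \<eta>)^2 > v^2" using cv v1 by (intro power_strict_mono) auto
  then have u: "4 * (cos \<eta>)^2 > sqrt 2" using vsq by simp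
  then have u2: "(4 * (cos \<eta>)^2)^2 > 2"
    using power_strict_mono[of "sqrt 2" "4 * (cos \<eta>)^2" 2] by simp
  define r where "r = cmod (a_par \<eta>)"
  have r_eq: "r = 1 / (2 * cos \<eta>)" using cmod_a[OF c0] by (simp add: r_def)
  have r0: "r > 0" using c0 r_eq by simp
  have "2 * cos \<eta> > 1" using cv v1 by simp
  then have r1: "r < 1" using r_eq by simp
  define C where "C = c_par \<eta>"
  have "r^4 < 1" using r0 r1 by (simp add: power_less_one_iff)
  then have C0: "C > 0" by (simp add: C_def c_par_def r_def)
  have nz: "cmod (zk \<eta> k) = C * r^(k+1)" for k
    using C0 by (simp add: zk_def C_def r_def norm_mult norm_power)
  have part1: "{zk \<eta> k | k. k \<ge> j} \<subseteq> cball 0 (cmod (zk \<eta> j))"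
  proof
    fix x assume "x \<in> {zk \<eta> k | k. k \<ge> j}"
    then obtain k where k: "k \<ge> j" "x = zk \<eta> k" by blast
    have "r^(k+1) \<le> r^(j+1)" using k r0 r1 by (intro power_decreasing) auto
    then show "x \<in> cball 0 (cmod (zk \<eta> j))" using k C0 nz by simp
  qed
  have part2: "broken_seg \<eta> j \<subseteq> - cball 0 (cmod (zk \<eta> j))"
  proof
    fix x assume "x \<in> broken_seg \<eta> j"
    then consider "x = zk \<eta> 0" | i where "1 \<le> i" "i < j" "x \<in> closed_segment (zk \<eta> (i - 1)) (zk \<eta> i)"
      unfolding broken_seg_def by auto
    then have "cmod x > C * r^(j+1)"
    proof cases
      case 1
      have "r^(j+1) < r^1" using r0 r1 assms(3) by (intro power_strict_decreasing) auto
      then show ?thesis using 1 nz C0 by simp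
    next
      case (2 i)
      obtain t where t: "0 \<le> t" "t \<le> 1" and xt: "x = (1 - t) *\<^sub>R zk \<eta> (i - 1) + t *\<^sub>R zk \<eta> i"
        using 2(3) unfolding closed_segment_def by blast
      define w where "w = (1 - t) *\<^sub>R 1 + t *\<^sub>R a_par \<eta>"
      have w: "w \<in> closed_segment 1 (a_par \<eta>)" unfolding closed_segment_def w_def using t by blast
      have wb: "cmod w > r^2" using seg_bound[OF c0 u2 w] by (simp add: r_def)
      have i1: "i - 1 + 1 = i" using 2(1) by simp
      have "x = complex_of_real C * a_par \<eta> ^ i * w"
        unfolding xt w_def zk_def C_def i1 by (simp add: scaleR_conv_of_real algebra_simps)
      then have "cmod x = C * r^i * cmod w" using C0 by (simp add: norm_mult norm_power r_def)
      moreover have "C * r^i * cmod w > C * r^i * r^2" using wb C0 r0 by simp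
      moreover have "r^(j+1) \<le> r^(i+2)" using 2(2) r0 r1 by (intro power_decreasing) auto
      moreover have "r^(i+2) = r^i * r^2" by (rule power_add)
      ultimately have A: "r^(j+1) \<le> r^i * r^2" "C * (r^i * r^2) < cmod x"
        by (simp_all only: mult.assoc)
      have "C * r^(j+1) \<le> C * (r^i * r^2)" using A(1) C0 by (intro mult_left_mono) auto
      note A = this A(2)
      then show ?thesis by linarith
    qed
    then show "x \<in> - cball 0 (cmod (zk \<eta> j))" using nz by simp
  qed
  show ?thesis using part1 part2 by blast
qed

end
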